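(* Let $f:X\to Y$ be a regular local homeomorphism between metric spaces. Suppose that $X$ is complete and $Y$ is path-connected and locally $\mathcal R$-contractible. If $f$ satisfies the Hadamard integral condition, then $f$ is a covering projection.
   Context: For non-isolated $x\in X$, $D_x^-f=\liminf_{z\to x,\,z\neq x}\frac{d(f(z),f(x))}{d(z,x)}$; $X$ is assumed to have no isolated points. $f$ is regular if $0<D_x^-f<\infty$ for every $x\in X$. $f$ satisfies the Hadamard integral condition if for some $x_0\in X$, $\int_0^\infty\inf_{x\in\overline{B_t(x_0)}}D_x^-f\,dt=\infty$, where $\overline{B_t(x_0)}=\{x:d(x,x_0)\le t\}$. A path $p:[0,1]\to Y$ is rectifiable if its length $\sup\sum_i d(p(t_i),p(t_{i+1}))$ over partitions is finite. $Y$ is locally $\mathcal R$-contractible if every $y_0\in Y$ has an open neighborhood $U$ with a continuous homotopy $H:U\times[0,1]\to U$ such that $H(y_0,t)=y_0$ for all $t$, $H(y,0)=y_0$, $H(y,1)=y$ for all $y\in U$, and each path $t\mapsto H(y,t)$ is rectifiable. *)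

theory Defs
  imports "HOL-Analysis.Analysis"
begin

definition lower_dini :: "('a::metric_space \<Rightarrow> 'b::metric_space) \<Rightarrow> 'a \<Rightarrow> ereal" where
  "lower_dini f x = Liminf (at x) (\<lambda>z. ereal (dist (f z) (f x) / dist z x))"

definition regular_map :: "('a::metric_space \<Rightarrow> 'b::metric_space) \<Rightarrow> bool" where
  "regular_map f \<longleftrightarrow> (\<forall>x. 0 < lower_dini f x \<and> lower_dini f x < \<infinity>)"

definition hadamard_integral_condition :: "('a::metric_space \<Rightarrow> 'b::metric_space) \<Rightarrow> bool" where
  "hadamard_integral_condition f \<longleftrightarrow>
     (\<exists>x0. (\<integral>\<^sup>+ t \<in> {0..}. e2ennreal (INF x\<in>cball x0 t. lower_dini f x) \<partial>lborel) = \<infinity>)"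

definition local_homeo :: "('a::topological_space \<Rightarrow> 'b::topological_space) \<Rightarrow> bool" where
  "local_homeo f \<longleftrightarrow>
     (\<forall>x. \<exists>U V g. open U \<and> x \<in> U \<and> open V \<and> homeomorphism U V f g)"

definition rectifiable_path :: "(real \<Rightarrow> 'b::metric_space) \<Rightarrow> bool" where
  "rectifiable_path p \<longleftrightarrow>
     (\<exists>B. \<forall>(n::nat) (ts::nat \<Rightarrow> real).
        ts 0 = 0 \<and> ts n = 1 \<and> (\<forall>i<n. ts i \<le> ts (Suc i)) \<longrightarrow>
        (\<Sum>i<n. dist (p (ts i)) (p (ts (Suc i)))) \<le> B)"

definition locally_R_contractible :: "'b::metric_space set \<Rightarrow> bool" where
  "locally_R_contractible Y \<longleftrightarrow>
     (\<forall>y0\<in>Y. \<exists>U H. openin (top_of_set Y) U \<and> y0 \<in> U \<and>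
        continuous_on (U \<times> {0..1}) H \<and> H ` (U \<times> {0..1}) \<subseteq> U \<and>
        (\<forall>t\<in>{0..1}. H (y0, t) = y0) \<and>
        (\<forall>y\<in>U. H (y, 0) = y0 \<and> H (y, 1) = y) \<and>
        (\<forall>y\<in>U. rectifiable_path (\<lambda>t. H (y, t))))"

end

theory Submission
  imports Defs
begin

definition psums :: "(real \<Rightarrow> 'b::metric_space) \<Rightarrow> real \<Rightarrow> real set" where
  "psums p t = {(\<Sum>i<n. dist (p (ts i)) (p (ts (Suc i)))) | n ts.
      ts 0 = 0 \<and> ts n = t \<and> (\<forall>i<n. ts i \<le> ts (Suc i))}"

definition plen :: "(real \<Rightarrow> 'b::metric_space) \<Rightarrow> real \<Rightarrow> real" where
  "plen p t = Sup (psums p t)"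

lemma psumsE:
  assumes "s \<in> psums p t"
  obtains n ts where "s = (\<Sum>i<n. dist (p (ts i)) (p (ts (Suc i))))"
      "ts 0 = 0" "ts n = t" "\<forall>i<n. ts i \<le> ts (Suc i)"
  using assms unfolding psums_def by blast

lemma psumsI:
  assumes "ts 0 = 0" "ts n = t" "\<forall>i<n. ts i \<le> ts (Suc i)"
  shows "(\<Sum>i<n. dist (p (ts i)) (p (ts (Suc i)))) \<in> psums p t"
  using assms unfolding psums_def by blast

lemma psums_extend:
  assumes "s \<in> psums p u" "u \<le> v"
  shows "s + dist (p u) (p v) \<in> psums p v"
proof -
  obtain n ts where s: "s = (\<Sum>i<n. dist (p (ts i)) (p (ts (Suc i))))"
    and ts: "ts 0 = 0" "ts n = u" "\<forall>i<n. ts i \<le> ts (Suc i)"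
    using assms(1) by (rule psumsE)
  define ts' where "ts' = ts(Suc n := v)"
  have e: "(\<Sum>i<Suc n. dist (p (ts' i)) (p (ts' (Suc i)))) = s + dist (p u) (p v)"
  proof -
    have "(\<Sum>i<n. dist (p (ts' i)) (p (ts' (Suc i)))) = s"
      unfolding s by (rule sum.cong) (auto simp: ts'_def)
    moreover have "ts' n = u" "ts' (Suc n) = v" using ts by (auto simp: ts'_def)
    ultimately show ?thesis by (simp only: sum.lessThan_Suc)
  qed
  have t0: "ts' 0 = 0" using ts by (simp add: ts'_def)
  have t1: "ts' (Suc n) = v" by (simp add: ts'_def)
  have t2: "\<forall>i<Suc n. ts' i \<le> ts' (Suc i)"
  proof (intro allI impI)
    fix i assume "i < Suc n"
    then consider "i < n" | "i = n" by linarith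
    then show "ts' i \<le> ts' (Suc i)"
    proof cases
      case 1
      then have "ts' i = ts i" "ts' (Suc i) = ts (Suc i)" by (auto simp: ts'_def)
      then show ?thesis using ts(3) 1 by simp
    next
      case 2
      then show ?thesis using ts(2) assms(2) by (simp add: ts'_def)
    qed
  qed
  note t0 t1 t2
  from psumsI[OF this, of p] show ?thesis unfolding e .
qed

lemma psums_nonempty: "0 \<le> t \<Longrightarrow> dist (p 0) (p t) \<in> psums p t"
proof -
  assume "0 \<le> t"
  have "0 \<in> psums p 0" using psumsI[of "\<lambda>i. 0" 0 0 p] by simp
  from psums_extend[OF this \<open>0 \<le> t\<close>] show ?thesis by simp
qed

lemma psums_bound:
  assumes "rectifiable_path p"
  obtains B where "\<And>t s. t \<le> 1 \<Longrightarrow> s \<in> psums p t \<Longrightarrow> s \<le> B"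
proof -
  obtain B where B: "\<forall>(n::nat) (ts::nat \<Rightarrow> real).
        ts 0 = 0 \<and> ts n = 1 \<and> (\<forall>i<n. ts i \<le> ts (Suc i)) \<longrightarrow>
        (\<Sum>i<n. dist (p (ts i)) (p (ts (Suc i)))) \<le> B"
    using assms unfolding rectifiable_path_def by blast
  have "s \<le> B" if "t \<le> 1" "s \<in> psums p t" for t s
  proof -
    have "s + dist (p t) (p 1) \<in> psums p 1" using psums_extend that by blast
    then obtain n ts where "s + dist (p t) (p 1) = (\<Sum>i<n. dist (p (ts i)) (p (ts (Suc i))))"
      "ts 0 = 0" "ts n = 1" "\<forall>i<n. ts i \<le> ts (Suc i)" by (rule psumsE)
    then have "s + dist (p t) (p 1) \<le> B" using B by metis
    then show ?thesis using zero_le_dist[of "p t" "p 1"] by linarith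
  qed
  then show ?thesis by (rule that)
qed

lemma plen_props:
  assumes "rectifiable_path p"
  obtains B where "\<And>t. 0 \<le> t \<Longrightarrow> t \<le> 1 \<Longrightarrow> 0 \<le> plen p t \<and> plen p t \<le> B"
    and "\<And>u v. 0 \<le> u \<Longrightarrow> u \<le> v \<Longrightarrow> v \<le> 1 \<Longrightarrow> plen p u + dist (p u) (p v) \<le> plen p v"
proof -
  obtain B where B: "\<And>t s. t \<le> 1 \<Longrightarrow> s \<in> psums p t \<Longrightarrow> s \<le> B"
    using psums_bound[OF assms] by metis
  have bdd: "bdd_above (psums p t)" if "t \<le> 1" for t
    unfolding bdd_above_def using B that by blast
  have ne: "psums p t \<noteq> {}" if "0 \<le> t" for t using psums_nonempty that by blast
  have 1: "0 \<le> plen p t \<and> plen p t \<le> B" if "0 \<le> t" "t \<le> 1" for t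
  proof
    show "0 \<le> plen p t" unfolding plen_def
      using cSup_upper[OF psums_nonempty[OF that(1)] bdd[OF that(2)]] zero_le_dist[of "p 0" "p t"]
      by linarith
    show "plen p t \<le> B" unfolding plen_def
      by (rule cSup_least[OF ne[OF that(1)]]) (use B that in auto)
  qed
  have 2: "plen p u + dist (p u) (p v) \<le> plen p v" if "0 \<le> u" "u \<le> v" "v \<le> 1" for u v
  proof -
    have "plen p u \<le> plen p v - dist (p u) (p v)" unfolding plen_def
    proof (rule cSup_least[OF ne[OF that(1)]])
      fix s assume "s \<in> psums p u"
      then have "s + dist (p u) (p v) \<in> psums p v" using psums_extend that by blast
      then have "s + dist (p u) (p v) \<le> Sup (psums p v)" using cSup_upper[OF _ bdd[OF that(3)]] by blast
      then show "s \<le> Sup (psums p v) - dist (p u) (p v)" by simp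
    qed
    then show ?thesis by simp
  qed
  show ?thesis by (rule that[of B]) (rule 1, assumption+, rule 2, assumption+)
qed


lemma mono_local:
  fixes G L :: "real \<Rightarrow> real"
  assumes ab: "a \<le> b" and G: "continuous_on {a..b} G"
    and L: "\<And>u v. a \<le> u \<Longrightarrow> u \<le> v \<Longrightarrow> v \<le> b \<Longrightarrow> L u \<le> L v"
    and loc: "\<And>t. a \<le> t \<Longrightarrow> t < b \<Longrightarrow> \<exists>\<delta>>0. \<forall>t'. t < t' \<and> t' < t + \<delta> \<and> t' \<le> b \<longrightarrow> G t' - G t \<le> L t' - L t"
  shows "G b - G a \<le> L b - L a"
proof -
  define S where "S = {s. a \<le> s \<and> s \<le> b \<and> (\<forall>t. a \<le> t \<and> t \<le> s \<longrightarrow> G t - G a \<le> L t - L a)}"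
  have aS: "a \<in> S" unfolding S_def using ab by auto
  have bdd: "bdd_above S" unfolding S_def bdd_above_def by auto
  define s where "s = Sup S"
  have as: "a \<le> s" unfolding s_def using cSup_upper[OF aS bdd] .
  have sb: "s \<le> b" unfolding s_def by (rule cSup_least) (use aS S_def in auto)
  have below: "G t - G a \<le> L t - L a" if "a \<le> t" "t < s" for t
  proof -
    have "\<exists>s'\<in>S. t < s'" using less_cSup_iff[OF _ bdd, of t] aS \<open>t < s\<close> s_def by blast
    then obtain s' where "s' \<in> S" "t < s'" by blast
    then show ?thesis unfolding S_def using that by auto
  qed
  have atS: "G s - G a \<le> L s - L a"
  proof (cases "a = s")
    case True then show ?thesis by simp
  next
    case False
    then have lt: "a < s" using as by simp
    have "(\<lambda>t. G t - G a - (L s - L a)) t \<le> 0" if "t \<in> {a..<s}" for t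
      using below[of t] L[of t s] that sb by auto
    moreover have "continuous_on (closure {a..<s}) (\<lambda>t. G t - G a - (L s - L a))"
    proof -
      have "continuous_on {a..s} G" using continuous_on_subset[OF G] sb by auto
      then show ?thesis using lt by (simp add: closure_atLeastLessThan continuous_on_diff continuous_on_const)
    qed
    moreover have "s \<in> closure {a..<s}" using lt by (simp add: closure_atLeastLessThan)
    ultimately have "(\<lambda>t. G t - G a - (L s - L a)) s \<le> 0"
      using continuous_le_on_closure[of "{a..<s}"] by blast
    then show ?thesis by simp
  qed
  have sS: "s \<in> S" unfolding S_def using as sb atS below by (auto simp: order_le_less)
  have "s = b"
  proof (rule ccontr)
    assume "s \<noteq> b"
    then have "s < b" using sb by simp
    obtain \<delta> where d: "\<delta> > 0" "\<forall>t'. s < t' \<and> t' < s + \<delta> \<and> t' \<le> b \<longrightarrow> G t' - G s \<le> L t' - L s"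
      using loc[OF as \<open>s < b\<close>] by blast
    define s' where "s' = min b (s + \<delta>/2)"
    have "s' \<in> S" unfolding S_def
    proof (intro CollectI conjI allI impI)
      show "a \<le> s'" "s' \<le> b" using as \<open>s < b\<close> d(1) by (auto simp: s'_def)
      fix t assume t: "a \<le> t \<and> t \<le> s'"
      show "G t - G a \<le> L t - L a"
      proof (cases "t \<le> s")
        case True then show ?thesis using sS t unfolding S_def by auto
      next
        case False
        then have "G t - G s \<le> L t - L s" using d t by (auto simp: s'_def)
        then show ?thesis using atS by simp
      qed
    qed
    then have "s' \<le> s" unfolding s_def using cSup_upper bdd by blast
    then show False using \<open>s < b\<close> d(1) by (auto simp: s'_def)
  qed
  then show ?thesis using atS by simp
qed

lemma lh_chart:
  assumes "local_homeo f"
  obtains A V g where "open A" "x \<in> A" "open V" "homeomorphism A V f g"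
  using assms unfolding local_homeo_def by blast

lemma lh_cont:
  fixes f :: "'a::metric_space \<Rightarrow> 'b::metric_space"
  assumes "local_homeo f"
  shows "continuous_on S f"
proof -
  have "isCont f x" for x
  proof -
    obtain A V g where "open A" "x \<in> A" "open V" "homeomorphism A V f g"
      using lh_chart[OF assms] by blast
    then have "continuous_on A f" unfolding homeomorphism_def by blast
    then show ?thesis using \<open>open A\<close> \<open>x \<in> A\<close> continuous_on_eq_continuous_at by blast
  qed
  then show ?thesis by (simp add: continuous_at_imp_continuous_on)
qed

lemma lift_unique:
  fixes f :: "'a::metric_space \<Rightarrow> 'b::metric_space" and q1 q2 :: "real \<Rightarrow> 'a"
  assumes lh: "local_homeo f" and I: "connected I"
    and c1: "continuous_on I q1" and c2: "continuous_on I q2"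
    and eq: "\<And>t. t \<in> I \<Longrightarrow> f (q1 t) = f (q2 t)"
    and s0: "s0 \<in> I" "q1 s0 = q2 s0" and t: "t \<in> I"
  shows "q1 t = q2 t"
proof -
  define E where "E = {t \<in> I. q1 t = q2 t}"
  have cl: "closedin (top_of_set I) E"
  proof -
    have "closedin (top_of_set I) {x \<in> topspace (top_of_set I). q1 x = q2 x}"
      by (rule closedin_continuous_maps_eq[OF Hausdorff_space_euclidean])
         (simp_all add: continuous_map_iff_continuous c1 c2)
    then show ?thesis unfolding E_def by simp
  qed
  have op: "openin (top_of_set I) E"
  proof (subst openin_subopen, intro ballI)
    fix u assume "u \<in> E"
    then have u: "u \<in> I" "q1 u = q2 u" unfolding E_def by auto
    obtain A V g where A: "open A" "q1 u \<in> A" "open V" "homeomorphism A V f g"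
      using lh_chart[OF lh] by blast
    define T where "T = (I \<inter> q1 -` A) \<inter> (I \<inter> q2 -` A)"
    have "openin (top_of_set I) T" unfolding T_def
      by (intro openin_Int continuous_openin_preimage_gen c1 c2 A(1))
    moreover have "u \<in> T" using u A unfolding T_def by auto
    moreover have "T \<subseteq> E"
    proof
      fix w assume "w \<in> T"
      then have w: "w \<in> I" "q1 w \<in> A" "q2 w \<in> A" unfolding T_def by auto
      have "\<forall>x\<in>A. g (f x) = x" using A(4) unfolding homeomorphism_def by blast
      then have "q1 w = q2 w" using w eq[OF w(1)] by metis
      then show "w \<in> E" using w unfolding E_def by auto
    qed
    ultimately show "\<exists>T. openin (top_of_set I) T \<and> u \<in> T \<and> T \<subseteq> E" by blast
  qed
  have "E \<noteq> {}" using s0 unfolding E_def by auto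
  then have "E = I" using I cl op unfolding connected_clopen by blast
  then show ?thesis using t unfolding E_def by auto
qed

lemma dist_pair_le: "dist (a, b) (c, d) \<le> dist a c + dist b d"
proof -
  have "sqrt ((dist a c)\<^sup>2 + (dist b d)\<^sup>2) \<le> sqrt ((dist a c + dist b d)\<^sup>2)"
    by (rule real_sqrt_le_mono) (simp add: power2_eq_square algebra_simps)
  also have "\<dots> = dist a c + dist b d" by simp
  finally show ?thesis by (simp add: dist_Pair_Pair)
qed

lemma homotopy_lift_cont:
  fixes f :: "'a::metric_space \<Rightarrow> 'b::metric_space" and h :: "'b \<times> real \<Rightarrow> 'b"
    and \<Phi> :: "'b \<Rightarrow> real \<Rightarrow> 'a"
  assumes lh: "local_homeo f" and U: "open U"
    and hc: "continuous_on (U \<times> {0..1}) h"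
    and \<Phi>c: "\<And>y. y \<in> U \<Longrightarrow> continuous_on {0..1} (\<Phi> y)"
    and \<Phi>0: "\<And>y. y \<in> U \<Longrightarrow> \<Phi> y 0 = x"
    and \<Phi>f: "\<And>y t. y \<in> U \<Longrightarrow> t \<in> {0..1} \<Longrightarrow> f (\<Phi> y t) = h (y, t)"
  shows "continuous_on (U \<times> {0..1}) (\<lambda>z. \<Phi> (fst z) (snd z))"
proof -
  let ?F = "\<lambda>z. \<Phi> (fst z) (snd z)"
  have local: "\<exists>N. open N \<and> y1 \<in> N \<and> N \<subseteq> U \<and> continuous_on (N \<times> {0..1}) ?F" if y1: "y1 \<in> U" for y1
  proof -
    define S where "S = {s. 0 \<le> s \<and> s \<le> 1 \<and> (\<exists>N. open N \<and> y1 \<in> N \<and> N \<subseteq> U \<and> continuous_on (N \<times> {0..s}) ?F)}"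
    have S0: "0 \<in> S"
    proof -
      have "continuous_on (U \<times> {0..0}) ?F"
        by (rule continuous_on_eq[OF continuous_on_const[of _ x]]) (use \<Phi>0 in auto)
      then show ?thesis unfolding S_def using U y1 by auto
    qed
    have Sdown: "s' \<in> S" if "s \<in> S" "0 \<le> s'" "s' \<le> s" for s s'
    proof -
      obtain N where N: "open N" "y1 \<in> N" "N \<subseteq> U" "continuous_on (N \<times> {0..s}) ?F" "s \<le> 1"
        using \<open>s \<in> S\<close> unfolding S_def by blast
      have "continuous_on (N \<times> {0..s'}) ?F"
        by (rule continuous_on_subset[OF N(4)]) (use that in auto)
      then show ?thesis unfolding S_def using N that by auto
    qed
    have bdd: "bdd_above S" unfolding S_def bdd_above_def by auto
    define s where "s = Sup S"
    have s0: "0 \<le> s" unfolding s_def using cSup_upper[OF S0 bdd] .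
    have s1: "s \<le> 1" unfolding s_def by (rule cSup_least) (use S0 in blast, auto simp: S_def)
    have below: "s' \<in> S" if "0 \<le> s'" "s' < s" for s'
    proof -
      have "\<exists>s''\<in>S. s' < s''" using less_cSup_iff[OF _ bdd, of s'] S0 \<open>s' < s\<close> s_def by blast
      then obtain s'' where "s'' \<in> S" "s' < s''" by blast
      then show ?thesis using Sdown that by auto
    qed
    define z where "z = \<Phi> y1 s"
    obtain A V g where A: "open A" "z \<in> A" "open V" "homeomorphism A V f g"
      using lh_chart[OF lh] by blast
    have gf: "\<And>w. w \<in> A \<Longrightarrow> g (f w) = w" and fA: "f ` A = V" and fg: "\<And>v. v \<in> V \<Longrightarrow> f (g v) = v"
      and gc: "continuous_on V g"
      using A(4) unfolding homeomorphism_def by auto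
    have hV: "h (y1, s) \<in> V"
    proof -
      have "h (y1, s) = f z" using \<Phi>f[OF y1, of s] s0 s1 z_def by simp
      then show ?thesis using A(2) fA by blast
    qed
    obtain e1 where e1: "e1 > 0" "ball (h (y1, s)) e1 \<subseteq> V" using A(3) hV openE by blast
    obtain d1 where d1: "d1 > 0" "\<forall>w\<in>U \<times> {0..1}. dist w (y1, s) < d1 \<longrightarrow> dist (h w) (h (y1, s)) < e1"
    proof -
      have "(y1, s) \<in> U \<times> {0..1}" using y1 s0 s1 by auto
      from continuous_on_iff[THEN iffD1, OF hc, rule_format, OF this e1(1)] show ?thesis using that by blast
    qed
    have hin: "h (y, t) \<in> V" if "y \<in> U" "dist y y1 < d1/2" "t \<in> {0..1}" "\<bar>t - s\<bar> < d1/2" for y t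
    proof -
      have "dist (y, t) (y1, s) < d1"
        using dist_pair_le[of y t y1 s] that by (simp add: dist_real_def)
      then have "dist (h (y, t)) (h (y1, s)) < e1" using d1 that by auto
      then show ?thesis using e1(2) by (auto simp: dist_commute)
    qed
    obtain e2 where e2: "e2 > 0" "ball z e2 \<subseteq> A" using A(1,2) openE by blast
    obtain d2 where d2: "d2 > 0" "\<forall>t\<in>{0..1}. dist t s < d2 \<longrightarrow> dist (\<Phi> y1 t) (\<Phi> y1 s) < e2"
    proof -
      have "s \<in> {0..1}" using s0 s1 by auto
      from continuous_on_iff[THEN iffD1, OF \<Phi>c[OF y1], rule_format, OF this e2(1)] show ?thesis using that by blast
    qed
    define \<delta> where "\<delta> = min (d1/2) d2"
    have \<delta>: "\<delta> > 0" using d1 d2 by (simp add: \<delta>_def)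
    define \<sigma> where "\<sigma> = max 0 (s - \<delta>/2)"
    have \<sigma>S: "\<sigma> \<in> S"
    proof (cases "s - \<delta>/2 \<le> 0")
      case True then show ?thesis using S0 by (simp add: \<sigma>_def)
    next
      case False then show ?thesis using below[of \<sigma>] \<delta> by (simp add: \<sigma>_def)
    qed
    have \<sigma>01: "0 \<le> \<sigma>" "\<sigma> \<le> s" using s0 \<delta> by (auto simp: \<sigma>_def)
    obtain N2 where N2: "open N2" "y1 \<in> N2" "N2 \<subseteq> U" "continuous_on (N2 \<times> {0..\<sigma>}) ?F"
      using \<sigma>S unfolding S_def by blast
    have \<Phi>\<sigma>A: "\<Phi> y1 \<sigma> \<in> A"
    proof -
      have "dist \<sigma> s < d2" using \<delta> \<sigma>01 unfolding \<sigma>_def \<delta>_def dist_real_def by auto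
      then have "dist (\<Phi> y1 \<sigma>) z < e2" using d2 \<sigma>01 s1 z_def by auto
      then show ?thesis using e2(2) by (auto simp: dist_commute)
    qed
    have c\<sigma>: "continuous_on N2 (\<lambda>y. \<Phi> y \<sigma>)"
    proof -
      have "continuous_on N2 (\<lambda>y. ?F (y, \<sigma>))"
        by (rule continuous_on_compose2[OF N2(4) continuous_on_Pair[OF continuous_on_id continuous_on_const]])
           (use \<sigma>01 in auto)
      then show ?thesis by simp
    qed
    define N3 where "N3 = ball y1 (d1/2) \<inter> (N2 \<inter> (\<lambda>y. \<Phi> y \<sigma>) -` A)"
    have N3o: "open N3"
    proof -
      have "open ((\<lambda>y. \<Phi> y \<sigma>) -` A \<inter> N2)"
        using continuous_on_open_vimage[OF N2(1), THEN iffD1, OF c\<sigma>, rule_format, OF A(1)] .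
      then have "open (N2 \<inter> (\<lambda>y. \<Phi> y \<sigma>) -` A)" by (simp add: Int_commute)
      then show ?thesis unfolding N3_def by (rule open_Int[OF open_ball])
    qed
    have N3y: "y1 \<in> N3" unfolding N3_def using d1 N2 \<Phi>\<sigma>A by auto
    have N3U: "N3 \<subseteq> U" unfolding N3_def using N2 by auto
    define \<tau> where "\<tau> = min 1 (s + \<delta>/2)"
    have \<tau>01: "s \<le> \<tau>" "\<tau> \<le> 1" using s1 \<delta> by (auto simp: \<tau>_def)
    have \<sigma>ge: "s - \<delta>/2 \<le> \<sigma>" by (simp add: \<sigma>_def)
    have \<tau>le: "\<tau> \<le> s + \<delta>/2" by (simp add: \<tau>_def)
    have \<delta>le: "\<delta> \<le> d1/2" by (simp add: \<delta>_def)
    have win: "t \<in> {0..1} \<and> \<bar>t - s\<bar> < d1/2" if "t \<in> {\<sigma>..\<tau>}" for t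
    proof -
      have "\<sigma> \<le> t" "t \<le> \<tau>" using that by auto
      moreover have "\<bar>t - s\<bar> < d1/2"
        unfolding abs_less_iff using calculation \<sigma>01 \<tau>01 \<delta> \<sigma>ge \<tau>le \<delta>le by linarith
      ultimately show ?thesis using \<sigma>01 \<tau>01 by simp
    qed
    have eqg: "\<Phi> y t = g (h (y, t))" if y: "y \<in> N3" and t: "t \<in> {\<sigma>..\<tau>}" for y t
    proof -
      have yU: "y \<in> U" "dist y y1 < d1/2" using y N3U unfolding N3_def by (auto simp: dist_commute)
      have hV': "h (y, t') \<in> V" if "t' \<in> {\<sigma>..\<tau>}" for t' using hin[OF yU] win[OF that] by auto
      show ?thesis
      proof (rule lift_unique[OF lh, of "{\<sigma>..\<tau>}" _ _ \<sigma>])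
        show "connected {\<sigma>..\<tau>}" by simp
        show "continuous_on {\<sigma>..\<tau>} (\<Phi> y)"
          by (rule continuous_on_subset[OF \<Phi>c[OF yU(1)]]) (use \<sigma>01 \<tau>01 in auto)
        have "continuous_on {\<sigma>..\<tau>} (\<lambda>t. h (y, t))"
          by (rule continuous_on_compose2[OF hc continuous_on_Pair[OF continuous_on_const continuous_on_id]])
             (use yU win in auto)
        then show "continuous_on {\<sigma>..\<tau>} (\<lambda>t. g (h (y, t)))"
          by (rule continuous_on_compose2[OF gc]) (use hV' in auto)
        show "f (\<Phi> y t') = f (g (h (y, t')))" if "t' \<in> {\<sigma>..\<tau>}" for t'
          using fg[OF hV'[OF that]] \<Phi>f[OF yU(1)] win[OF that] by auto
        show "\<sigma> \<in> {\<sigma>..\<tau>}" using \<sigma>01 \<tau>01 by auto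
        have "\<Phi> y \<sigma> \<in> A" using y unfolding N3_def by auto
        moreover have "f (\<Phi> y \<sigma>) = h (y, \<sigma>)" using \<Phi>f[OF yU(1), of \<sigma>] \<sigma>01 s1 by auto
        ultimately show "\<Phi> y \<sigma> = g (h (y, \<sigma>))" using gf by metis
        show "t \<in> {\<sigma>..\<tau>}" by fact
      qed
    qed
    have cont\<tau>: "continuous_on (N3 \<times> {0..\<tau>}) ?F"
    proof -
      let ?G = "\<lambda>z. if snd z \<le> \<sigma> then ?F z else g (h z)"
      have "continuous_on (N3 \<times> {0..\<tau>}) ?G"
      proof (rule continuous_on_cases_le)
        show "continuous_on {z \<in> N3 \<times> {0..\<tau>}. snd z \<le> \<sigma>} ?F"
          by (rule continuous_on_subset[OF N2(4)]) (use N3_def in auto)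
        have "continuous_on {z \<in> N3 \<times> {0..\<tau>}. \<sigma> \<le> snd z} h"
          by (rule continuous_on_subset[OF hc]) (use N3U \<tau>01 in auto)
        then show "continuous_on {z \<in> N3 \<times> {0..\<tau>}. \<sigma> \<le> snd z} (\<lambda>z. g (h z))"
        proof (rule continuous_on_compose2[OF gc])
          show "h ` {z \<in> N3 \<times> {0..\<tau>}. \<sigma> \<le> snd z} \<subseteq> V"
          proof clarsimp
            fix y t assume "y \<in> N3" "0 \<le> t" "t \<le> \<tau>" "\<sigma> \<le> t"
            then have "y \<in> U" "dist y y1 < d1/2" using N3U unfolding N3_def by (auto simp: dist_commute)
            moreover have "t \<in> {0..1} \<and> \<bar>t - s\<bar> < d1/2" using win \<open>\<sigma> \<le> t\<close> \<open>t \<le> \<tau>\<close> by simp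
            ultimately show "h (y, t) \<in> V" using hin by blast
          qed
        qed
        show "continuous_on (N3 \<times> {0..\<tau>}) snd" by (rule continuous_on_snd[OF continuous_on_id])
        show "?F z = g (h z)" if "z \<in> N3 \<times> {0..\<tau>}" "snd z = \<sigma>" for z
          using eqg[of "fst z" "snd z"] that \<sigma>01 \<tau>01 by (cases z) auto
      qed
      moreover have "?G z = ?F z" if "z \<in> N3 \<times> {0..\<tau>}" for z
        using eqg[of "fst z" "snd z"] that \<sigma>01 by (cases z) auto
      ultimately show ?thesis by (rule continuous_on_eq)
    qed
    have "\<tau> \<in> S" unfolding S_def using cont\<tau> N3o N3y N3U \<tau>01 s0 by auto
    then have "\<tau> \<le> s" unfolding s_def by (rule cSup_upper[OF _ bdd])
    then have "\<tau> = 1" using \<tau>01 \<delta> unfolding \<tau>_def by auto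
    then have "1 \<in> S" using \<open>\<tau> \<in> S\<close> by simp
    then show ?thesis unfolding S_def by auto
  qed
  show ?thesis
    unfolding continuous_on_eq_continuous_within
  proof
    fix w :: "'b \<times> real" assume w: "w \<in> U \<times> {0..1}"
    obtain N where N: "open N" "fst w \<in> N" "N \<subseteq> U" "continuous_on (N \<times> {0..1}) ?F"
      using local[of "fst w"] w by auto
    have wN: "w \<in> N \<times> {0..1}" using w N by (cases w) auto
    have "continuous (at w within N \<times> {0..1}) ?F"
      using N(4) wN unfolding continuous_on_eq_continuous_within by blast
    moreover have "at w within U \<times> {0..1} = at w within N \<times> {0..1}"
    proof (rule at_within_nhd[of _ "N \<times> UNIV"])
      show "w \<in> N \<times> UNIV" using wN by auto
      show "open (N \<times> (UNIV::real set))" using N(1) by (simp add: open_Times)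
      show "U \<times> {0..1} \<inter> N \<times> UNIV - {w} = N \<times> {0..1} \<inter> N \<times> UNIV - {w}" using N(3) by auto
    qed
    ultimately show "continuous (at w within U \<times> {0..1}) ?F" by simp
  qed
qed

lemma hadamard_facts:
  fixes f :: "'a::metric_space \<Rightarrow> 'b::metric_space"
  assumes reg: "regular_map f" and had: "hadamard_integral_condition f"
  obtains x0 :: 'a and M mr :: "real \<Rightarrow> real" where
    "\<And>r. 0 \<le> r \<Longrightarrow> 0 < mr r"
    "\<And>r x. dist x0 x \<le> r \<Longrightarrow> ereal (mr r) \<le> lower_dini f x"
    "continuous_on {0..} M"
    "\<And>u v. 0 \<le> u \<Longrightarrow> u \<le> v \<Longrightarrow> M u \<le> M v"
    "\<And>u v. 0 \<le> u \<Longrightarrow> u \<le> v \<Longrightarrow> M v \<le> M u + mr u * (v - u)"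
    "\<And>C. \<exists>R\<ge>0. C < M R"
proof -
  obtain x0 where H: "(\<integral>\<^sup>+ t \<in> {0..}. e2ennreal (INF x\<in>cball x0 t. lower_dini f x) \<partial>lborel) = \<infinity>"
    using had unfolding hadamard_integral_condition_def by blast
  define md where "md t = (INF x\<in>cball x0 t. lower_dini f x)" for t
  have ld: "0 < lower_dini f x" "lower_dini f x < \<infinity>" for x
    using reg unfolding regular_map_def by auto
  define K where "K = real_of_ereal (lower_dini f x0)"
  have K: "ereal K = lower_dini f x0" "0 < K"
    using ld[of x0] unfolding K_def by (cases "lower_dini f x0"; simp)+
  have md_anti: "md t' \<le> md t" if "t \<le> t'" for t t'
    unfolding md_def by (rule INF_superset_mono) (use that in \<open>auto simp: subset_cball\<close>)
  have md_nonneg: "0 \<le> md t" for t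
    unfolding md_def by (rule INF_greatest) (use ld in \<open>auto intro: less_imp_le\<close>)
  have md_le_ld: "md t \<le> lower_dini f x" if "dist x0 x \<le> t" for t x
    unfolding md_def by (rule INF_lower) (use that in auto)
  have md_le: "md t \<le> ereal K" if "0 \<le> t" for t
    using md_le_ld[of x0 t] that K by simp
  define mr where "mr t = real_of_ereal (md t)" for t
  have md_real: "md t = ereal (mr t)" "0 \<le> mr t" "mr t \<le> K" if "0 \<le> t" for t
  proof -
    have a: "0 \<le> md t" "md t \<le> ereal K" using md_nonneg md_le that by auto
    then show "md t = ereal (mr t)" unfolding mr_def by (cases "md t") auto
    show "0 \<le> mr t" using a unfolding mr_def by (cases "md t") auto
    show "mr t \<le> K" using a unfolding mr_def by (cases "md t") auto
  qed
  have mr_anti: "mr t' \<le> mr t" if "0 \<le> t" "t \<le> t'" for t t'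
    using md_anti[OF that(2)] md_real[OF that(1)] md_real[of t'] that by auto
  define F where "F t = e2ennreal (md t)" for t
  have F_real: "F t = ennreal (mr t)" if "0 \<le> t" for t
    unfolding F_def using md_real[OF that] by (simp add: e2ennreal_ereal)
  define G where "G t = ennreal (mr (max t 0))" for t
  have G_anti: "G t' \<le> G t" if "t \<le> t'" for t t'
    unfolding G_def using mr_anti[of "max t 0" "max t' 0"] that by (auto intro: ennreal_leI)
  have G_F: "G t = F t" if "0 \<le> t" for t
    unfolding G_def using F_real[OF that] that by simp
  have G_le: "G t \<le> ennreal K" for t
    unfolding G_def using md_real[of "max t 0"] by (auto intro: ennreal_leI)
  have G_meas: "G \<in> borel_measurable lborel"
  proof -
    have "(\<lambda>t. - mr (max t 0)) \<in> borel_measurable borel"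
      by (rule borel_measurable_mono) (auto simp: mono_def intro!: mr_anti)
    then have "(\<lambda>t. - (- mr (max t 0))) \<in> borel_measurable borel"
      by (rule borel_measurable_uminus)
    then have "(\<lambda>t. mr (max t 0)) \<in> borel_measurable borel" by simp
    then have "(\<lambda>t. ennreal (mr (max t 0))) \<in> borel_measurable borel" by measurable
    then show ?thesis unfolding G_def by (simp add: measurable_lborel2)
  qed
  define Im where "Im R = (\<integral>\<^sup>+ t. G t * indicator {0..R} t \<partial>lborel)" for R
  have Im_le: "Im R \<le> ennreal (K * R)" if "0 \<le> R" for R
  proof -
    have "Im R \<le> (\<integral>\<^sup>+ t. ennreal K * indicator {0..R} t \<partial>lborel)"
      unfolding Im_def
    proof (rule nn_integral_mono)
      fix t show "G t * indicator {0..R} t \<le> ennreal K * indicator {0..R} t"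
        using G_le[of t] by (auto simp: indicator_def)
    qed
    also have "\<dots> = ennreal K * emeasure lborel {0..R}"
      using nn_integral_cmult_indicator[of "{0..R}" lborel "ennreal K"] by simp
    also have "\<dots> = ennreal (K * R)" using that K by (simp add: ennreal_mult)
    finally show ?thesis .
  qed
  have Im_fin: "Im R < \<infinity>" if "0 \<le> R" for R
    using Im_le[OF that] by (simp add: le_less_trans)
  have Im_mono: "Im a \<le> Im b" if "a \<le> b" for a b
    unfolding Im_def
  proof (rule nn_integral_mono)
    fix t show "G t * indicator {0..a} t \<le> G t * indicator {0..b} t"
      using that by (auto simp: indicator_def)
  qed
  have Im_step: "Im b \<le> Im a + ennreal (mr a * (b - a))" if "0 \<le> a" "a \<le> b" for a b
  proof -
    have "Im b \<le> (\<integral>\<^sup>+ t. G t * indicator {0..a} t + ennreal (mr a) * indicator {a<..b} t \<partial>lborel)"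
      unfolding Im_def
    proof (rule nn_integral_mono)
      fix t
      show "G t * indicator {0..b} t \<le> G t * indicator {0..a} t + ennreal (mr a) * indicator {a<..b} t"
      proof (cases "0 \<le> t \<and> t \<le> a")
        case True then show ?thesis by (simp add: indicator_def)
      next
        case False
        show ?thesis
        proof (cases "a < t \<and> t \<le> b")
          case True
          then have "G t \<le> G a" using G_anti by auto
          then show ?thesis using True False G_F[OF that(1)] F_real[OF that(1)] by (simp add: indicator_def)
        next
          case False
          then show ?thesis using \<open>\<not> (0 \<le> t \<and> t \<le> a)\<close> that by (auto simp: indicator_def)
        qed
      qed
    qed
    also have "\<dots> = Im a + (\<integral>\<^sup>+ t. ennreal (mr a) * indicator {a<..b} t \<partial>lborel)"
      unfolding Im_def by (rule nn_integral_add) (use G_meas in measurable)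
    also have "(\<integral>\<^sup>+ t. ennreal (mr a) * indicator {a<..b} t \<partial>lborel) = ennreal (mr a) * ennreal (b - a)"
      using nn_integral_cmult_indicator[of "{a<..b}" lborel "ennreal (mr a)"] that by simp
    also have "ennreal (mr a) * ennreal (b - a) = ennreal (mr a * (b - a))"
      using md_real(2)[OF that(1)] by (metis ennreal_mult')
    finally show ?thesis .
  qed
  have div: "\<exists>R\<ge>0. ennreal C < Im R" for C
  proof (rule ccontr)
    assume "\<not> ?thesis"
    then have b: "Im R \<le> ennreal C" if "0 \<le> R" for R using that by (auto simp: not_less)
    have "(\<integral>\<^sup>+ t \<in> {0..}. e2ennreal (INF x\<in>cball x0 t. lower_dini f x) \<partial>lborel)
        = (\<integral>\<^sup>+ t. G t * indicator {0..} t \<partial>lborel)"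
      by (rule nn_integral_cong) (auto simp: F_def md_def G_F indicator_def)
    also have "\<dots> \<le> (\<integral>\<^sup>+ t. (SUP n. G t * indicator {0..real n} t) \<partial>lborel)"
    proof (rule nn_integral_mono)
      fix t
      show "G t * indicator {0..} t \<le> (SUP n. G t * indicator {0..real n} t)"
      proof (cases "0 \<le> t")
        case True
        have "G t * indicator {0..} t = G t * indicator {0..real (nat \<lceil>t\<rceil>)} t"
          using True by (simp add: indicator_def)
        also have "\<dots> \<le> (SUP n. G t * indicator {0..real n} t)" by (rule SUP_upper) simp
        finally show ?thesis .
      next
        case False then show ?thesis by (simp add: indicator_def)
      qed
    qed
    also have "\<dots> = (SUP n. Im (real n))"
      unfolding Im_def
    proof (rule nn_integral_monotone_convergence_SUP)
      show "incseq (\<lambda>n t. G t * indicator {0..real n} t)"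
        by (auto simp: incseq_def le_fun_def indicator_def intro!: mult_left_mono)
      show "\<And>n. (\<lambda>t. G t * indicator {0..real n} t) \<in> borel_measurable lborel"
        using G_meas by measurable
    qed
    also have "\<dots> \<le> ennreal C" by (rule SUP_least) (use b in auto)
    finally have "\<infinity> \<le> ennreal C" using H by simp
    then show False by (simp add: top_unique)
  qed
  have mr_pos: "0 < mr r" if "0 \<le> r" for r
  proof (rule ccontr)
    assume "\<not> 0 < mr r"
    then have z: "mr r = 0" using md_real[OF that] by auto
    have "Im R \<le> Im r" for R
    proof (cases "R \<le> r")
      case True then show ?thesis using Im_mono by auto
    next
      case False
      then show ?thesis using Im_step[OF that, of R] z by simp
    qed
    moreover obtain R where "R \<ge> 0" "ennreal (enn2real (Im r)) < Im R" using div by blast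
    moreover have "ennreal (enn2real (Im r)) = Im r" using Im_fin[OF that] by (simp add: ennreal_enn2real_if)
    ultimately show False by (metis not_le)
  qed
  define M where "M R = enn2real (Im R)" for R
  have IM: "Im R = ennreal (M R)" "0 \<le> M R" if "0 \<le> R" for R
    unfolding M_def using Im_fin[OF that] by (auto simp: ennreal_enn2real_if)
  have M_mono: "M u \<le> M v" if "0 \<le> u" "u \<le> v" for u v
    using Im_mono[OF that(2)] IM[OF that(1)] IM[of v] that by (auto simp: ennreal_le_iff)
  have M_step: "M v \<le> M u + mr u * (v - u)" if "0 \<le> u" "u \<le> v" for u v
  proof -
    have "ennreal (M v) \<le> ennreal (M u) + ennreal (mr u * (v - u))"
      using Im_step[OF that] IM[OF that(1)] IM[of v] that by simp
    also have "\<dots> = ennreal (M u + mr u * (v - u))"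
      using IM[OF that(1)] md_real[OF that(1)] that by (simp add: ennreal_plus)
    finally show ?thesis
      using IM[OF that(1)] md_real[OF that(1)] that
      by (subst (asm) ennreal_le_iff) auto
  qed
  have M_lip: "\<bar>M v - M u\<bar> \<le> K * \<bar>v - u\<bar>" if "0 \<le> u" "0 \<le> v" for u v
  proof -
    have *: "M b - M a \<le> K * (b - a)" "0 \<le> M b - M a" if "0 \<le> a" "a \<le> b" for a b
    proof -
      have "mr a * (b - a) \<le> K * (b - a)" using md_real[OF that(1)] that by (intro mult_right_mono) auto
      then show "M b - M a \<le> K * (b - a)" using M_step[OF that] by linarith
      show "0 \<le> M b - M a" using M_mono[OF that] by simp
    qed
    show ?thesis
    proof (cases "u \<le> v")
      case True then show ?thesis using *[OF that(1) True] by (simp add: abs_if)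
    next
      case False then show ?thesis using *[OF that(2), of u] by (simp add: abs_if)
    qed
  qed
  have M_cont: "continuous_on {0..} M"
    unfolding continuous_on_iff
  proof (intro ballI allI impI)
    fix u e assume "u \<in> {0::real..}" "(0::real) < e"
    show "\<exists>d>0. \<forall>v\<in>{0..}. dist v u < d \<longrightarrow> dist (M v) (M u) < e"
    proof (intro exI[of _ "e / K"] conjI ballI impI)
      show "0 < e / K" using \<open>0 < e\<close> K by simp
      fix v assume "v \<in> {0::real..}" "dist v u < e / K"
      then have "K * \<bar>v - u\<bar> < e" using K by (simp add: dist_real_def field_simps)
      then show "dist (M v) (M u) < e"
        using M_lip[of u v] \<open>u \<in> {0..}\<close> \<open>v \<in> {0..}\<close> by (simp add: dist_real_def)
    qed
  qed
  have M_div: "\<exists>R\<ge>0. C < M R" for C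
  proof -
    obtain R where R: "R \<ge> 0" "ennreal (max C 0) < Im R" using div by blast
    then have "max C 0 < M R" using IM[OF R(1)] by (simp add: ennreal_less_iff)
    then show ?thesis using R(1) by auto
  qed
  have o2: "ereal (mr r) \<le> lower_dini f x" if "dist x0 x \<le> r" for r x
  proof -
    have "0 \<le> r" using that zero_le_dist order_trans by blast
    then show ?thesis using md_le_ld[OF that] md_real by metis
  qed
  show ?thesis
    by (rule that[of mr x0 M]) (use mr_pos o2 M_cont M_mono M_step M_div in auto)
qed

lemma dini_expand:
  fixes f :: "'a::metric_space \<Rightarrow> 'b::metric_space"
  assumes "ereal r < lower_dini f x"
  shows "\<exists>\<delta>>0. \<forall>z. dist z x < \<delta> \<longrightarrow> r * dist z x \<le> dist (f z) (f x)"
proof -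
  have "eventually (\<lambda>z. ereal r < ereal (dist (f z) (f x) / dist z x)) (at x)"
    using less_LiminfD[OF assms[unfolded lower_dini_def]] .
  then obtain d where d: "d > 0" "\<forall>z\<in>UNIV. z \<noteq> x \<and> dist z x < d \<longrightarrow> ereal r < ereal (dist (f z) (f x) / dist z x)"
    unfolding eventually_at by blast
  show ?thesis
  proof (intro exI[of _ d] conjI allI impI)
    show "d > 0" by fact
    fix z assume z: "dist z x < d"
    show "r * dist z x \<le> dist (f z) (f x)"
    proof (cases "z = x")
      case True then show ?thesis by simp
    next
      case False
      then have "r < dist (f z) (f x) / dist z x" using d z by auto
      moreover have "dist z x > 0" using False by simp
      ultimately show ?thesis by (simp add: pos_less_divide_eq less_imp_le)
    qed
  qed
qed

lemma local_step_common:
  fixes f :: "'a::metric_space \<Rightarrow> 'b::metric_space" and q :: "real \<Rightarrow> 'a"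
  assumes qc: "continuous_on {a..b} q" and t: "t \<in> {a..b}"
    and d: "ereal r < lower_dini f (q t)"
  shows "\<exists>\<delta>>0. \<forall>t'\<in>{a..b}. dist t' t < \<delta> \<longrightarrow> r * dist (q t') (q t) \<le> dist (f (q t')) (f (q t))"
proof -
  obtain dz where dz: "dz > 0" "\<forall>z. dist z (q t) < dz \<longrightarrow> r * dist z (q t) \<le> dist (f z) (f (q t))"
    using dini_expand[OF d] by blast
  obtain \<delta> where \<delta>: "\<delta> > 0" "\<forall>t'\<in>{a..b}. dist t' t < \<delta> \<longrightarrow> dist (q t') (q t) < dz"
    using continuous_on_iff[THEN iffD1, OF qc, rule_format, OF t dz(1)] by blast
  show ?thesis using \<delta> dz by blast
qed

lemma lift_lip:
  fixes f :: "'a::metric_space \<Rightarrow> 'b::metric_space" and q :: "real \<Rightarrow> 'a"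
    and p :: "real \<Rightarrow> 'b" and L :: "real \<Rightarrow> real"
  assumes ab: "a \<le> b" and qc: "continuous_on {a..b} q" and qf: "\<And>t. t \<in> {a..b} \<Longrightarrow> f (q t) = p t"
    and Lp: "\<And>u v. a \<le> u \<Longrightarrow> u \<le> v \<Longrightarrow> v \<le> b \<Longrightarrow> L u + dist (p u) (p v) \<le> L v"
    and dini: "\<And>t. t \<in> {a..b} \<Longrightarrow> ereal \<mu> < lower_dini f (q t)" and \<mu>: "0 \<le> \<mu>"
  shows "\<mu> * dist (q a) (q b) \<le> L b - L a"
proof -
  let ?G = "\<lambda>t. \<mu> * dist (q a) (q t)"
  have "?G b - ?G a \<le> L b - L a"
  proof (rule mono_local[OF ab])
    show "continuous_on {a..b} ?G"
      by (intro continuous_on_mult continuous_on_const continuous_on_dist qc)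
    show "L u \<le> L v" if "a \<le> u" "u \<le> v" "v \<le> b" for u v
      using Lp[OF that] zero_le_dist[of "p u" "p v"] by linarith
    fix t assume t: "a \<le> t" "t < b"
    then have tI: "t \<in> {a..b}" by auto
    obtain \<delta> where \<delta>: "\<delta> > 0" "\<forall>t'\<in>{a..b}. dist t' t < \<delta> \<longrightarrow> \<mu> * dist (q t') (q t) \<le> dist (f (q t')) (f (q t))"
      using local_step_common[OF qc tI dini[OF tI]] by blast
    show "\<exists>\<delta>>0. \<forall>t'. t < t' \<and> t' < t + \<delta> \<and> t' \<le> b \<longrightarrow> ?G t' - ?G t \<le> L t' - L t"
    proof (intro exI[of _ \<delta>] conjI allI impI)
      show "\<delta> > 0" by fact
      fix t' assume t': "t < t' \<and> t' < t + \<delta> \<and> t' \<le> b"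
      then have t'I: "t' \<in> {a..b}" "dist t' t < \<delta>" using t by (auto simp: dist_real_def)
      have e1: "\<mu> * dist (q t') (q t) \<le> dist (p t') (p t)"
        using \<delta>(2) t'I qf[OF t'I(1)] qf[OF tI] by auto
      have "dist (q a) (q t') \<le> dist (q a) (q t) + dist (q t') (q t)"
        by (metis dist_commute dist_triangle)
      then have "?G t' - ?G t \<le> \<mu> * dist (q t') (q t)"
        using \<mu> by (simp add: right_diff_distrib[symmetric] mult_left_mono)
      also have "\<dots> \<le> dist (p t) (p t')" using e1 by (simp add: dist_commute)
      also have "\<dots> \<le> L t' - L t" using Lp[of t t'] t t' by auto
      finally show "?G t' - ?G t \<le> L t' - L t" .
    qed
  qed
  then show ?thesis by simp
qed

lemma lift_rad:
  fixes f :: "'a::metric_space \<Rightarrow> 'b::metric_space" and q :: "real \<Rightarrow> 'a"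
    and p :: "real \<Rightarrow> 'b" and L M mr :: "real \<Rightarrow> real"
  assumes ab: "a \<le> b" and qc: "continuous_on {a..b} q" and qf: "\<And>t. t \<in> {a..b} \<Longrightarrow> f (q t) = p t"
    and Lp: "\<And>u v. a \<le> u \<Longrightarrow> u \<le> v \<Longrightarrow> v \<le> b \<Longrightarrow> L u + dist (p u) (p v) \<le> L v"
    and Mc: "continuous_on {0..} M"
    and Mmono: "\<And>u v. 0 \<le> u \<Longrightarrow> u \<le> v \<Longrightarrow> M u \<le> M v"
    and Mstep: "\<And>u v. 0 \<le> u \<Longrightarrow> u \<le> v \<Longrightarrow> M v \<le> M u + mr u * (v - u)"
    and mr0: "\<And>r. 0 \<le> r \<Longrightarrow> 0 \<le> mr r"
    and dini: "\<And>t. t \<in> {a..b} \<Longrightarrow> ereal (mr (dist x0 (q t)) / 2) < lower_dini f (q t)"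
  shows "M (dist x0 (q b)) / 2 - M (dist x0 (q a)) / 2 \<le> L b - L a"
proof -
  let ?G = "\<lambda>t. M (dist x0 (q t)) / 2"
  have "?G b - ?G a \<le> L b - L a"
  proof (rule mono_local[OF ab])
    have "continuous_on {a..b} (\<lambda>t. M (dist x0 (q t)))"
      by (rule continuous_on_compose2[OF Mc]) (auto intro: continuous_on_dist continuous_on_const qc)
    then show "continuous_on {a..b} ?G"
      by (intro continuous_on_divide continuous_on_const) auto
    show Lm: "L u \<le> L v" if "a \<le> u" "u \<le> v" "v \<le> b" for u v
      using Lp[OF that] zero_le_dist[of "p u" "p v"] by linarith
    fix t assume t: "a \<le> t" "t < b"
    then have tI: "t \<in> {a..b}" by auto
    define r0 where "r0 = dist x0 (q t)"
    obtain \<delta> where \<delta>: "\<delta> > 0" "\<forall>t'\<in>{a..b}. dist t' t < \<delta> \<longrightarrow> mr r0 / 2 * dist (q t') (q t) \<le> dist (f (q t')) (f (q t))"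
      using local_step_common[OF qc tI dini[OF tI]] unfolding r0_def by blast
    show "\<exists>\<delta>>0. \<forall>t'. t < t' \<and> t' < t + \<delta> \<and> t' \<le> b \<longrightarrow> ?G t' - ?G t \<le> L t' - L t"
    proof (intro exI[of _ \<delta>] conjI allI impI)
      show "\<delta> > 0" by fact
      fix t' assume t': "t < t' \<and> t' < t + \<delta> \<and> t' \<le> b"
      then have t'I: "t' \<in> {a..b}" "dist t' t < \<delta>" using t by (auto simp: dist_real_def)
      have e1: "mr r0 / 2 * dist (q t') (q t) \<le> dist (p t') (p t)"
        using \<delta>(2) t'I qf[OF t'I(1)] qf[OF tI] by auto
      have Lt: "L t \<le> L t'" using Lm[of t t'] t t' by auto
      define r1 where "r1 = dist x0 (q t')"
      have r0: "0 \<le> r0" unfolding r0_def by simp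
      show "?G t' - ?G t \<le> L t' - L t"
      proof (cases "r1 \<le> r0")
        case True
        then have "M r1 \<le> M r0" using Mmono[of r1 r0] unfolding r1_def by simp
        then show ?thesis using Lt unfolding r0_def r1_def by simp
      next
        case False
        then have s: "M r1 \<le> M r0 + mr r0 * (r1 - r0)" using Mstep[OF r0, of r1] by simp
        have "r1 - r0 \<le> dist (q t') (q t)" unfolding r0_def r1_def
          by (metis dist_commute dist_triangle diff_le_eq add.commute)
        then have "mr r0 * (r1 - r0) \<le> mr r0 * dist (q t') (q t)"
          using mr0[OF r0] by (simp add: mult_left_mono)
        then have "M r1 / 2 - M r0 / 2 \<le> mr r0 / 2 * dist (q t') (q t)" using s by simp
        also have "\<dots> \<le> dist (p t) (p t')" using e1 by (simp add: dist_commute)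
        also have "\<dots> \<le> L t' - L t" using Lp[of t t'] t t' by auto
        finally show ?thesis unfolding r0_def r1_def .
      qed
    qed
  qed
  then show ?thesis .
qed

lemma lift_path:
  fixes f :: "'a::metric_space \<Rightarrow> 'b::metric_space" and p :: "real \<Rightarrow> 'b"
  assumes lh: "local_homeo f" and reg: "regular_map f" and cX: "complete (UNIV::'a set)"
    and had: "hadamard_integral_condition f"
    and pc: "continuous_on {0..1} p" and pr: "rectifiable_path p" and x: "f x = p 0"
  shows "\<exists>q. continuous_on {0..1} q \<and> q 0 = x \<and> (\<forall>t\<in>{0..1}. f (q t) = p t)"
proof -
  obtain x0 :: 'a and M mr :: "real \<Rightarrow> real" where
    mr_pos: "\<And>r. 0 \<le> r \<Longrightarrow> 0 < mr r" and
    o2: "\<And>r x. dist x0 x \<le> r \<Longrightarrow> ereal (mr r) \<le> lower_dini f x" and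
    Mc: "continuous_on {0..} M" and
    Mmono: "\<And>u v. 0 \<le> u \<Longrightarrow> u \<le> v \<Longrightarrow> M u \<le> M v" and
    Mstep: "\<And>u v. 0 \<le> u \<Longrightarrow> u \<le> v \<Longrightarrow> M v \<le> M u + mr u * (v - u)" and
    Mdiv: "\<And>C. \<exists>R\<ge>0. C < M R"
    using hadamard_facts[OF reg had] by metis
  obtain B where LB: "\<And>t. 0 \<le> t \<Longrightarrow> t \<le> 1 \<Longrightarrow> 0 \<le> plen p t \<and> plen p t \<le> B"
    and Lp: "\<And>u v. 0 \<le> u \<Longrightarrow> u \<le> v \<Longrightarrow> v \<le> 1 \<Longrightarrow> plen p u + dist (p u) (p v) \<le> plen p v"
    using plen_props[OF pr] by metis
  define L where "L = plen p"
  obtain R where R: "R \<ge> 0" "M (dist x0 x) + 2 * B < M R" using Mdiv by blast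
  define \<mu> where "\<mu> = mr R"
  have \<mu>: "\<mu> > 0" unfolding \<mu>_def using mr_pos R(1) by simp
  define isl where "isl s q \<longleftrightarrow> continuous_on {0..s} q \<and> q 0 = x \<and> (\<forall>t\<in>{0..s}. f (q t) = p t)" for s q
  have dini_half: "ereal (mr r / 2) < lower_dini f y" if "dist x0 y \<le> r" for r y
  proof -
    have "0 \<le> r" using that zero_le_dist order_trans by blast
    then have "mr r / 2 < mr r" using mr_pos by simp
    then have "ereal (mr r / 2) < ereal (mr r)" by simp
    also have "\<dots> \<le> lower_dini f y" using o2[OF that] .
    finally show ?thesis .
  qed
  have inball: "dist x0 (q t) < R" if "s \<le> 1" "isl s q" "t \<in> {0..s}" for s q t
  proof -
    have q: "continuous_on {0..s} q" "q 0 = x" "\<And>t. t \<in> {0..s} \<Longrightarrow> f (q t) = p t"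
      using that(2) unfolding isl_def by auto
    have t: "0 \<le> t" "t \<le> s" using that(3) by auto
    have "M (dist x0 (q t)) / 2 - M (dist x0 (q 0)) / 2 \<le> L t - L 0"
    proof (rule lift_rad[where f = f and p = p and mr = mr])
      show "0 \<le> t" by fact
      show "continuous_on {0..t} q" by (rule continuous_on_subset[OF q(1)]) (use t in auto)
      show "f (q u) = p u" if "u \<in> {0..t}" for u using q(3) that t by auto
      show "L u + dist (p u) (p v) \<le> L v" if "0 \<le> u" "u \<le> v" "v \<le> t" for u v
        unfolding L_def using Lp that t \<open>s \<le> 1\<close> by auto
      show "continuous_on {0..} M" by fact
      show "M u \<le> M v" if "0 \<le> u" "u \<le> v" for u v using Mmono that .
      show "M v \<le> M u + mr u * (v - u)" if "0 \<le> u" "u \<le> v" for u v using Mstep that .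
      show "0 \<le> mr r" if "0 \<le> r" for r using mr_pos[OF that] by simp
      show "ereal (mr (dist x0 (q u)) / 2) < lower_dini f (q u)" if "u \<in> {0..t}" for u
        using dini_half[of "q u" "dist x0 (q u)"] by simp
    qed
    moreover have "L t - L 0 \<le> B" using LB[of t] LB[of 0] t \<open>s \<le> 1\<close> unfolding L_def by auto
    ultimately have "M (dist x0 (q t)) \<le> M (dist x0 x) + 2 * B" using q(2) by simp
    then show ?thesis using R Mmono[OF R(1), of "dist x0 (q t)"] by (meson less_le_trans not_le)
  qed
  have lip: "\<mu> / 2 * dist (q u) (q v) \<le> L v - L u"
    if "s \<le> 1" "isl s q" "0 \<le> u" "u \<le> v" "v \<le> s" for s q u v
  proof -
    have q: "continuous_on {0..s} q" "\<And>t. t \<in> {0..s} \<Longrightarrow> f (q t) = p t"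
      using that(2) unfolding isl_def by auto
    show ?thesis
    proof (rule lift_lip[where f = f and p = p])
      show "u \<le> v" by fact
      show "continuous_on {u..v} q" by (rule continuous_on_subset[OF q(1)]) (use that in auto)
      show "f (q t) = p t" if "t \<in> {u..v}" for t using q(2) that \<open>0 \<le> u\<close> \<open>v \<le> s\<close> by auto
      show "L a + dist (p a) (p b) \<le> L b" if "u \<le> a" "a \<le> b" "b \<le> v" for a b
        unfolding L_def using Lp that \<open>0 \<le> u\<close> \<open>v \<le> s\<close> \<open>s \<le> 1\<close> by auto
      show "ereal (\<mu> / 2) < lower_dini f (q t)" if "t \<in> {u..v}" for t
      proof -
        have "dist x0 (q t) < R" using inball[OF \<open>s \<le> 1\<close> \<open>isl s q\<close>, of t] that \<open>0 \<le> u\<close> \<open>v \<le> s\<close> by auto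
        then show ?thesis using dini_half[of "q t" R] unfolding \<mu>_def by simp
      qed
      show "0 \<le> \<mu> / 2" using \<mu> by simp
    qed
  qed
  define T where "T = {s. 0 \<le> s \<and> s \<le> 1 \<and> (\<exists>q. isl s q)}"
  have T0: "0 \<in> T"
  proof -
    have "isl 0 (\<lambda>_. x)" unfolding isl_def using x by auto
    then show ?thesis unfolding T_def by auto
  qed
  have Tdown: "s' \<in> T" if "s \<in> T" "0 \<le> s'" "s' \<le> s" for s s'
  proof -
    have "(\<exists>q. isl s q) \<and> s \<le> 1" using that(1) unfolding T_def by simp
    then obtain q where q: "isl s q" "s \<le> 1" by blast
    have "isl s' q" using q(1) that unfolding isl_def by (auto intro: continuous_on_subset)
    then show ?thesis unfolding T_def using that q by auto
  qed
  have bdd: "bdd_above T" unfolding T_def bdd_above_def by auto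
  define s where "s = Sup T"
  have s0: "0 \<le> s" unfolding s_def using cSup_upper[OF T0 bdd] .
  have s1: "s \<le> 1" unfolding s_def by (rule cSup_least) (use T0 in blast, auto simp: T_def)
  define tn where "tn n = s * (1 - inverse (real (Suc n)))" for n
  have tn0: "0 \<le> tn n" "tn n \<le> s" for n
  proof -
    have i: "inverse (real (Suc n)) \<le> 1" "0 \<le> inverse (real (Suc n))"
      by (simp_all add: inverse_le_1_iff)
    show "0 \<le> tn n" unfolding tn_def using i s0 by simp
    have "0 \<le> s * inverse (real (Suc n))" using i s0 by simp
    then show "tn n \<le> s" unfolding tn_def by (simp add: algebra_simps)
  qed
  have tn_mono: "tn n \<le> tn m" if "n \<le> m" for n m
  proof -
    have "inverse (real (Suc m)) \<le> inverse (real (Suc n))" using that by (simp add: le_imp_inverse_le)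
    then show ?thesis unfolding tn_def using s0 by (simp add: mult_left_mono)
  qed
  have tn_lim: "tn \<longlonglongrightarrow> s"
  proof -
    have "(\<lambda>n. s * (1 - inverse (real (Suc n)))) \<longlonglongrightarrow> s * (1 - 0)"
      by (intro tendsto_mult tendsto_diff tendsto_const LIMSEQ_inverse_real_of_nat)
    then show ?thesis unfolding tn_def by simp
  qed
  have tnT: "tn n \<in> T" for n
  proof (cases "tn n < s")
    case True
    have "\<exists>s'\<in>T. tn n < s'" using less_cSup_iff[OF _ bdd, of "tn n"] T0 True s_def by blast
    then obtain s' where "s' \<in> T" "tn n < s'" by blast
    then show ?thesis using Tdown tn0 by auto
  next
    case False
    then have "tn n = s" using tn0(2)[of n] by linarith
    then have "s * inverse (real (Suc n)) = 0" unfolding tn_def by (simp add: algebra_simps)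
    then have "s = 0" by simp
    then show ?thesis using T0 \<open>tn n = s\<close> by simp
  qed
  have "\<forall>n. \<exists>q. isl (tn n) q" using tnT unfolding T_def by auto
  then obtain qn where qn: "\<And>n. isl (tn n) (qn n)" by metis
  have qn': "continuous_on {0..tn n} (qn n)" "qn n 0 = x" "\<And>t. t \<in> {0..tn n} \<Longrightarrow> f (qn n t) = p t" for n
    using qn[of n] unfolding isl_def by auto
  have tn1: "tn n \<le> 1" for n using tn0[of n] s1 by simp
  have coh: "qn m (tn n) = qn n (tn n)" if "n \<le> m" for n m
  proof (rule lift_unique[OF lh, of "{0..tn n}" _ _ 0])
    show "connected {0..tn n}" by simp
    show "continuous_on {0..tn n} (qn m)"
      by (rule continuous_on_subset[OF qn'(1)[of m]]) (use tn_mono[OF that] in auto)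
    show "continuous_on {0..tn n} (qn n)" by (rule qn'(1))
    show "f (qn m t) = f (qn n t)" if "t \<in> {0..tn n}" for t
      using qn'(3)[of t n] qn'(3)[of t m] that tn_mono[OF \<open>n \<le> m\<close>] by auto
    show "0 \<in> {0..tn n}" using tn0 by simp
    show "qn m 0 = qn n 0" using qn' by simp
    show "tn n \<in> {0..tn n}" using tn0 by simp
  qed
  define w where "w n = qn n (tn n)" for n
  define Ls where "Ls n = L (tn n)" for n
  have wd: "\<mu> / 2 * dist (w n) (w m) \<le> \<bar>Ls m - Ls n\<bar>" for n m
  proof -
    have *: "\<mu> / 2 * dist (w n) (w m) \<le> Ls m - Ls n" if "n \<le> m" for n m
    proof -
      have "\<mu> / 2 * dist (qn m (tn n)) (qn m (tn m)) \<le> L (tn m) - L (tn n)"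
        by (rule lip[OF tn1 qn[of m]]) (use tn0 tn_mono[OF that] in auto)
      then show ?thesis unfolding w_def Ls_def using coh[OF that] by simp
    qed
    show ?thesis
    proof (cases "n \<le> m")
      case True
      have "Ls m - Ls n \<le> \<bar>Ls m - Ls n\<bar>" by (rule abs_ge_self)
      then show ?thesis using *[OF True] by linarith
    next
      case False
      have "Ls n - Ls m \<le> \<bar>Ls m - Ls n\<bar>" by (simp add: abs_minus_commute)
      then show ?thesis using *[of m n] False by (simp add: dist_commute)
    qed
  qed
  have Ls_conv: "convergent Ls"
  proof (rule Bseq_monoseq_convergent)
    show "Bseq Ls"
      by (rule BseqI'[of _ B]) (use LB tn0 tn1 in \<open>auto simp: Ls_def L_def\<close>)
    show "monoseq Ls"
    proof (rule incseq_imp_monoseq)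
      show "incseq Ls" unfolding incseq_def
      proof (intro allI impI)
        fix n m :: nat assume "n \<le> m"
        then show "Ls n \<le> Ls m" unfolding Ls_def L_def
          using Lp[of "tn n" "tn m"] tn0 tn1 tn_mono zero_le_dist by (smt (verit))
      qed
    qed
  qed
  have wC: "Cauchy w"
    unfolding Cauchy_def
  proof (intro allI impI)
    fix e :: real assume e: "e > 0"
    have "Cauchy Ls" using Ls_conv by (rule convergent_Cauchy)
    then obtain N where N: "\<forall>m\<ge>N. \<forall>n\<ge>N. dist (Ls m) (Ls n) < \<mu> / 2 * e"
      unfolding Cauchy_def using e \<mu> by (meson half_gt_zero mult_pos_pos)
    show "\<exists>N. \<forall>m\<ge>N. \<forall>n\<ge>N. dist (w m) (w n) < e"
    proof (intro exI[of _ N] allI impI)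
      fix m n assume "m \<ge> N" "n \<ge> N"
      then have "dist (Ls m) (Ls n) < \<mu> / 2 * e" using N by blast
      then have "\<bar>Ls n - Ls m\<bar> < \<mu> / 2 * e" by (simp add: dist_real_def abs_minus_commute)
      then have "\<mu> / 2 * dist (w m) (w n) < \<mu> / 2 * e"
        using wd[of m n] by linarith
      then show "dist (w m) (w n) < e" using \<mu> by simp
    qed
  qed
  obtain z where z: "w \<longlonglongrightarrow> z"
    using cX wC unfolding complete_def by blast
  have fc: "continuous_on UNIV f" by (rule lh_cont[OF lh])
  have fz: "f z = p s"
  proof -
    have "(\<lambda>n. f (w n)) \<longlonglongrightarrow> f z"
      using continuous_on_tendsto_compose[OF fc z] by simp
    moreover have "(\<lambda>n. f (w n)) = (\<lambda>n. p (tn n))"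
      unfolding w_def using qn'(3) tn0 by auto
    moreover have "(\<lambda>n. p (tn n)) \<longlonglongrightarrow> p s"
      by (rule continuous_on_tendsto_compose[OF pc tn_lim]) (use s0 s1 tn0 tn1 in auto)
    ultimately show ?thesis using LIMSEQ_unique by metis
  qed
  obtain A V g where A: "open A" "z \<in> A" "open V" "homeomorphism A V f g"
    using lh_chart[OF lh] by blast
  have gf: "\<And>y. y \<in> A \<Longrightarrow> g (f y) = y" and fA: "f ` A = V" and fg: "\<And>v. v \<in> V \<Longrightarrow> f (g v) = v"
    and gc: "continuous_on V g"
    using A(4) unfolding homeomorphism_def by auto
  have psV: "p s \<in> V" using fz A(2) fA by (metis imageI)
  obtain e where e: "e > 0" "ball (p s) e \<subseteq> V" using A(3) psV openE by blast
  obtain \<delta> where \<delta>: "\<delta> > 0" "\<forall>t\<in>{0..1}. dist t s < \<delta> \<longrightarrow> dist (p t) (p s) < e"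
  proof -
    have "s \<in> {0..1}" using s0 s1 by auto
    from continuous_on_iff[THEN iffD1, OF pc, rule_format, OF this e(1)] show ?thesis using that by blast
  qed
  have pV: "p t \<in> V" if "t \<in> {0..1}" "dist t s < \<delta>" for t
  proof -
    have "dist (p t) (p s) < e" using \<delta>(2) that by blast
    then have "p t \<in> ball (p s) e" by (simp add: dist_commute)
    then show ?thesis using e(2) by blast
  qed
  have ev: "eventually (\<lambda>n. w n \<in> A \<and> dist (tn n) s < \<delta>) sequentially"
    using topological_tendstoD[OF z A(1,2)] tendstoD[OF tn_lim \<delta>(1)] by (rule eventually_conj)
  then obtain n where n: "w n \<in> A" "dist (tn n) s < \<delta>"
    unfolding eventually_sequentially by blast
  define \<tau> where "\<tau> = min 1 (s + \<delta>/2)"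
  have \<tau>: "s \<le> \<tau>" "\<tau> \<le> 1" "\<tau> \<le> s + \<delta>/2" using s1 \<delta> by (auto simp: \<tau>_def)
  have tnd: "s - \<delta> < tn n" using n(2) tn0[of n] by (auto simp: dist_real_def)
  have pV': "p t \<in> V" if "tn n \<le> t" "t \<le> \<tau>" for t
  proof (rule pV)
    show "t \<in> {0..1}" using that tn0[of n] \<tau> by auto
    show "dist t s < \<delta>" using that tnd \<tau> \<delta> by (auto simp: dist_real_def abs_less_iff)
  qed
  define q' where "q' t = (if t \<le> tn n then qn n t else g (p t))" for t
  have "isl \<tau> q'"
    unfolding isl_def
  proof (intro conjI ballI)
    have "continuous_on {0..\<tau>} (\<lambda>t. if t \<le> tn n then qn n t else g (p t))"
    proof (rule continuous_on_cases_le)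
      show "continuous_on {t \<in> {0..\<tau>}. t \<le> tn n} (qn n)"
        by (rule continuous_on_subset[OF qn'(1)]) auto
      have "continuous_on {t \<in> {0..\<tau>}. tn n \<le> t} p"
        by (rule continuous_on_subset[OF pc]) (use \<tau> in auto)
      then show "continuous_on {t \<in> {0..\<tau>}. tn n \<le> t} (\<lambda>t. g (p t))"
        by (rule continuous_on_compose2[OF gc]) (use pV' in auto)
      show "continuous_on {0..\<tau>} (\<lambda>t. t)" by (rule continuous_on_id)
      show "qn n t = g (p t)" if "t \<in> {0..\<tau>}" "t = tn n" for t
      proof -
        have "f (w n) = p (tn n)" unfolding w_def using qn'(3)[of "tn n" n] tn0 by auto
        then show ?thesis using gf[OF n(1)] that unfolding w_def by simp
      qed
    qed
    then show "continuous_on {0..\<tau>} q'" unfolding q'_def .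
    show "q' 0 = x" unfolding q'_def using tn0 qn' by simp
    fix t assume t: "t \<in> {0..\<tau>}"
    show "f (q' t) = p t"
    proof (cases "t \<le> tn n")
      case True then show ?thesis unfolding q'_def using qn'(3)[of t n] t by auto
    next
      case False then show ?thesis unfolding q'_def using fg pV'[of t] t by auto
    qed
  qed
  then have "\<tau> \<in> T" unfolding T_def using \<tau> s0 by auto
  then have "\<tau> \<le> s" unfolding s_def by (rule cSup_upper[OF _ bdd])
  then have "\<tau> = 1" using \<tau> \<delta> unfolding \<tau>_def by auto
  then have "isl 1 q'" using \<open>isl \<tau> q'\<close> by simp
  then show ?thesis unfolding isl_def by blast
qed

lemma rect_reverse:
  assumes "rectifiable_path p"
  shows "rectifiable_path (\<lambda>t. p (1 - t))"
proof -
  obtain B where B: "\<forall>(n::nat) (ts::nat \<Rightarrow> real).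
        ts 0 = 0 \<and> ts n = 1 \<and> (\<forall>i<n. ts i \<le> ts (Suc i)) \<longrightarrow>
        (\<Sum>i<n. dist (p (ts i)) (p (ts (Suc i)))) \<le> B"
    using assms unfolding rectifiable_path_def by blast
  show ?thesis unfolding rectifiable_path_def
  proof (intro exI[of _ B] allI impI)
    fix n :: nat and ts :: "nat \<Rightarrow> real"
    assume ts: "ts 0 = 0 \<and> ts n = 1 \<and> (\<forall>i<n. ts i \<le> ts (Suc i))"
    define ts' where "ts' i = 1 - ts (n - i)" for i
    have a: "ts' 0 = 0" "ts' n = 1" using ts by (auto simp: ts'_def)
    have b: "\<forall>i<n. ts' i \<le> ts' (Suc i)"
    proof (intro allI impI)
      fix i assume "i < n"
      then have "n - i = Suc (n - Suc i)" "n - Suc i < n" by auto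
      moreover have "ts (n - Suc i) \<le> ts (Suc (n - Suc i))" using ts \<open>i < n\<close> by auto
      ultimately show "ts' i \<le> ts' (Suc i)" unfolding ts'_def by simp
    qed
    have le: "(\<Sum>i<n. dist (p (ts' i)) (p (ts' (Suc i)))) \<le> B" using B a b by blast
    have "(\<Sum>i<n. dist (p (1 - ts i)) (p (1 - ts (Suc i))))
        = (\<Sum>i<n. (\<lambda>j. dist (p (ts' j)) (p (ts' (Suc j)))) (n - Suc i))"
    proof (rule sum.cong[OF refl])
      fix i assume "i \<in> {..<n}"
      then have i: "n - (n - Suc i) = Suc i" "n - Suc (n - Suc i) = i" by auto
      show "dist (p (1 - ts i)) (p (1 - ts (Suc i))) = (\<lambda>j. dist (p (ts' j)) (p (ts' (Suc j)))) (n - Suc i)"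
        unfolding ts'_def using i by (simp add: dist_commute)
    qed
    also have "\<dots> = (\<Sum>j<n. dist (p (ts' j)) (p (ts' (Suc j))))" by (rule sum.nat_diff_reindex)
    finally show "(\<Sum>i<n. dist (p (1 - ts i)) (p (1 - ts (Suc i)))) \<le> B" using le by simp
  qed
qed

theorem theorem5:
  fixes f :: "'a::metric_space \<Rightarrow> 'b::metric_space"
  assumes no_isolated: "\<forall>x::'a. x islimpt (UNIV::'a set)"
    and lh: "local_homeo f"
    and reg: "regular_map f"
    and complete_X: "complete (UNIV::'a set)"
    and pc_Y: "path_connected (UNIV::'b set)"
    and lrc_Y: "locally_R_contractible (UNIV::'b set)"
    and had: "hadamard_integral_condition f"
  shows "covering_space (UNIV::'a set) f (UNIV::'b set)"
proof -
  have fc: "continuous_on UNIV f" by (rule lh_cont[OF lh])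
  have lift: "\<exists>q. continuous_on {0..1} q \<and> q 0 = x \<and> (\<forall>t\<in>{0..1}. f (q t) = p t)"
    if "continuous_on {0..1} p" "rectifiable_path p" "f x = p 0" for p x
    using lift_path[OF lh reg complete_X had that] .
  have key: "\<exists>U. y0 \<in> U \<and> open U \<and> (\<forall>z. f z \<in> U \<longrightarrow> (\<exists>x. f x = y0)) \<and>
     (\<exists>v. \<Union>v = UNIV \<inter> f -` U \<and> (\<forall>u\<in>v. openin (top_of_set UNIV) u) \<and> pairwise disjnt v \<and>
          (\<forall>u\<in>v. \<exists>q. homeomorphism u U f q))" for y0
  proof -
    from lrc_Y[unfolded locally_R_contractible_def, rule_format, OF UNIV_I[of y0]]
    obtain U H where UH: "openin (top_of_set UNIV) U" "y0 \<in> U"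
        "continuous_on (U \<times> {0..1}) H" "H ` (U \<times> {0..1}) \<subseteq> U"
        "\<forall>t\<in>{0..1}. H (y0, t) = y0"
        "\<forall>y\<in>U. H (y, 0) = y0 \<and> H (y, 1) = y"
        "\<forall>y\<in>U. rectifiable_path (\<lambda>t. H (y, t))"
      by (elim exE conjE) (rule that)
    have Uo: "open U" using UH(1) by simp
    have Hp: "continuous_on {0..1} (\<lambda>t. H (y, t))" if "y \<in> U" for y
      by (rule continuous_on_compose2[OF UH(3) continuous_on_Pair[OF continuous_on_const continuous_on_id]])
         (use that in auto)
    define Lam where "Lam x y = (SOME q. continuous_on {0..1} q \<and> q 0 = x \<and> (\<forall>t\<in>{0..1}. f (q t) = H (y, t)))" for x y
    have Lam: "continuous_on {0..1} (Lam x y) \<and> Lam x y 0 = x \<and> (\<forall>t\<in>{0..1}. f (Lam x y t) = H (y, t))"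
      if "f x = y0" "y \<in> U" for x y
    proof -
      have "\<exists>q. continuous_on {0..1} q \<and> q 0 = x \<and> (\<forall>t\<in>{0..1}. f (q t) = H (y, t))"
        using lift[OF Hp[OF that(2)]] UH(7) UH(6) that by auto
      then show ?thesis unfolding Lam_def by (rule someI_ex)
    qed
    define Lx where "Lx x y = Lam x y 1" for x y
    have fLx: "f (Lx x y) = y" if "f x = y0" "y \<in> U" for x y
      using Lam[OF that] UH(6) that(2) unfolding Lx_def by auto
    have Lxc: "continuous_on U (Lx x)" if "f x = y0" for x
    proof -
      have "continuous_on (U \<times> {0..1}) (\<lambda>z. Lam x (fst z) (snd z))"
      proof (rule homotopy_lift_cont[OF lh Uo UH(3)])
        show "continuous_on {0..1} (Lam x y)" if "y \<in> U" for y using Lam[OF \<open>f x = y0\<close> that] by blast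
        show "Lam x y 0 = x" if "y \<in> U" for y using Lam[OF \<open>f x = y0\<close> that] by blast
        show "f (Lam x y t) = H (y, t)" if "y \<in> U" "t \<in> {0..1}" for y t
          using Lam[OF \<open>f x = y0\<close> that(1)] that(2) by blast
      qed
      then have "continuous_on U (\<lambda>y. (\<lambda>z. Lam x (fst z) (snd z)) (y, 1::real))"
        by (rule continuous_on_compose2[OF _ continuous_on_Pair[OF continuous_on_id continuous_on_const]]) auto
      then show ?thesis unfolding Lx_def by simp
    qed
    have uniq_end: "Lam x1 y t = Lam x2 y t" if "f x1 = y0" "f x2 = y0" "y \<in> U"
        "Lam x1 y s = Lam x2 y s" "s \<in> {0..1}" "t \<in> {0..1}" for x1 x2 y s t
    proof (rule lift_unique[OF lh, of "{0..1}" "Lam x1 y" "Lam x2 y" s t])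
      show "connected {0::real..1}" by simp
      show "continuous_on {0..1} (Lam x1 y)" using Lam[OF that(1,3)] by blast
      show "continuous_on {0..1} (Lam x2 y)" using Lam[OF that(2,3)] by blast
      show "f (Lam x1 y t) = f (Lam x2 y t)" if "t \<in> {0..1}" for t
        using Lam[OF \<open>f x1 = y0\<close> \<open>y \<in> U\<close>] Lam[OF \<open>f x2 = y0\<close> \<open>y \<in> U\<close>] that by auto
    qed (use that in auto)
    have pre: "\<exists>x. f x = y0 \<and> Lx x (f z) = z" if "f z \<in> U" for z
    proof -
      define y where "y = f z"
      have yU: "y \<in> U" using that y_def by simp
      have rc: "continuous_on {0..1} (\<lambda>t. H (y, 1 - t))"
        by (rule continuous_on_compose2[OF Hp[OF yU] continuous_on_diff[OF continuous_on_const continuous_on_id]]) auto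
      have rr: "rectifiable_path (\<lambda>t. H (y, 1 - t))"
        using rect_reverse[OF UH(7)[rule_format, OF yU]] by simp
      have r0: "f z = H (y, 1 - 0)" using UH(6) yU y_def by simp
      obtain q where q: "continuous_on {0..1} q" "q 0 = z" "\<forall>t\<in>{0..1}. f (q t) = H (y, 1 - t)"
        using lift[OF rc rr] r0 by auto
      define x where "x = q 1"
      have fx: "f x = y0" using q(3) UH(6) yU unfolding x_def by auto
      have "Lam x y t = q (1 - t)" if "t \<in> {0..1}" for t
      proof (rule lift_unique[OF lh, of "{0..1}" "Lam x y" "\<lambda>t. q (1 - t)" 0 t])
        show "connected {0::real..1}" by simp
        show "continuous_on {0..1} (Lam x y)" using Lam[OF fx yU] by blast
        show "continuous_on {0..1} (\<lambda>t. q (1 - t))"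
          by (rule continuous_on_compose2[OF q(1) continuous_on_diff[OF continuous_on_const continuous_on_id]]) auto
        show "f (Lam x y t) = f (q (1 - t))" if "t \<in> {0..1}" for t
          using Lam[OF fx yU] q(3) that by auto
        show "(0::real) \<in> {0..1}" by simp
        show "Lam x y 0 = q (1 - 0)" using Lam[OF fx yU] x_def by simp
        show "t \<in> {0..1}" by fact
      qed
      then have "Lx x y = z" unfolding Lx_def using q(2) by simp
      then show ?thesis using fx unfolding y_def by blast
    qed
    define v where "v = {Lx x ` U | x. f x = y0}"
    have cover: "\<Union>v = UNIV \<inter> f -` U"
    proof
      show "\<Union>v \<subseteq> UNIV \<inter> f -` U" unfolding v_def using fLx by auto
      show "UNIV \<inter> f -` U \<subseteq> \<Union>v"
      proof
        fix z assume "z \<in> UNIV \<inter> f -` U"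
        then obtain x where "f x = y0" "Lx x (f z) = z" using pre by auto
        then have "z \<in> Lx x ` U" "Lx x ` U \<in> v" using \<open>z \<in> UNIV \<inter> f -` U\<close> unfolding v_def by (force, blast)
        then show "z \<in> \<Union>v" by blast
      qed
    qed
    have opn: "open (Lx x ` U)" if fx: "f x = y0" for x
      unfolding open_subopen[of "Lx x ` U"]
    proof
      fix w assume "w \<in> Lx x ` U"
      then obtain y where y: "y \<in> U" "w = Lx x y" by auto
      obtain A V g where A: "open A" "w \<in> A" "open V" "homeomorphism A V f g"
        using lh_chart[OF lh] by blast
      have gf: "\<And>a. a \<in> A \<Longrightarrow> g (f a) = a" using A(4) unfolding homeomorphism_def by auto
      have N: "open (Lx x -` A \<inter> U)"
        using continuous_on_open_vimage[OF Uo, THEN iffD1, OF Lxc[OF fx], rule_format, OF A(1)] .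
      have O: "open (f -` (Lx x -` A \<inter> U) \<inter> UNIV)"
        using continuous_on_open_vimage[OF open_UNIV, THEN iffD1, OF fc, rule_format, OF N] .
      show "\<exists>T. open T \<and> w \<in> T \<and> T \<subseteq> Lx x ` U"
      proof (intro exI[of _ "A \<inter> (f -` (Lx x -` A \<inter> U) \<inter> UNIV)"] conjI)
        show "open (A \<inter> (f -` (Lx x -` A \<inter> U) \<inter> UNIV))" using A(1) O by (rule open_Int)
        show "w \<in> A \<inter> (f -` (Lx x -` A \<inter> U) \<inter> UNIV)" using A(2) y fLx[OF fx y(1)] by auto
        show "A \<inter> (f -` (Lx x -` A \<inter> U) \<inter> UNIV) \<subseteq> Lx x ` U"
        proof
          fix a assume a: "a \<in> A \<inter> (f -` (Lx x -` A \<inter> U) \<inter> UNIV)"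
          then have aA: "a \<in> A" "Lx x (f a) \<in> A" "f a \<in> U" by auto
          have "f (Lx x (f a)) = f a" using fLx[OF fx aA(3)] .
          then have "Lx x (f a) = a" using gf[OF aA(1)] gf[OF aA(2)] by metis
          then show "a \<in> Lx x ` U" using aA(3) by (metis imageI)
        qed
      qed
    qed
    have disj: "pairwise disjnt v"
      unfolding pairwise_def
    proof (intro ballI impI)
      fix u1 u2 assume u: "u1 \<in> v" "u2 \<in> v" "u1 \<noteq> u2"
      obtain x1 where x1: "f x1 = y0" "u1 = Lx x1 ` U" using u(1) unfolding v_def by auto
      obtain x2 where x2: "f x2 = y0" "u2 = Lx x2 ` U" using u(2) unfolding v_def by auto
      show "disjnt u1 u2"
      proof (rule ccontr)
        assume "\<not> disjnt u1 u2"
        then obtain w where "w \<in> u1" "w \<in> u2" unfolding disjnt_def by auto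
        then obtain y1 y2 where y: "y1 \<in> U" "y2 \<in> U" "w = Lx x1 y1" "w = Lx x2 y2" using x1 x2 by auto
        have "y1 = y2" using fLx[OF x1(1) y(1)] fLx[OF x2(1) y(2)] y by simp
        then have "Lam x1 y1 1 = Lam x2 y1 1" using y unfolding Lx_def by simp
        then have "Lam x1 y1 0 = Lam x2 y1 0" using uniq_end[OF x1(1) x2(1) y(1), of 1 0] by simp
        then have "x1 = x2" using Lam[OF x1(1) y(1)] Lam[OF x2(1) y(1)] by simp
        then show False using x1 x2 u(3) by simp
      qed
    qed
    have hom: "\<exists>q. homeomorphism u U f q" if uv: "u \<in> v" for u
    proof -
      obtain x where x: "f x = y0" "u = Lx x ` U" using uv unfolding v_def by auto
      have "homeomorphism (Lx x ` U) U f (Lx x)"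
        unfolding homeomorphism_def
      proof (intro conjI ballI)
        show "Lx x (f w) = w" if "w \<in> Lx x ` U" for w using that fLx[OF x(1)] by auto
        show "f ` Lx x ` U = U"
        proof
          show "f ` Lx x ` U \<subseteq> U" using fLx[OF x(1)] by auto
          show "U \<subseteq> f ` Lx x ` U"
          proof
            fix y assume "y \<in> U"
            then have "y = f (Lx x y)" using fLx[OF x(1)] by simp
            then show "y \<in> f ` Lx x ` U" using \<open>y \<in> U\<close> by blast
          qed
        qed
        show "continuous_on (Lx x ` U) f" using fc by (rule continuous_on_subset) simp
        show "f (Lx x y) = y" if "y \<in> U" for y using fLx[OF x(1) that] .
        show "Lx x ` U = Lx x ` U" ..
        show "continuous_on U (Lx x)" by (rule Lxc[OF x(1)])
      qed
      then show ?thesis using x(2) by (intro exI[of _ "Lx x"]) simp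
    qed
    have preU: "\<forall>z. f z \<in> U \<longrightarrow> (\<exists>x. f x = y0)" using pre by blast
    show ?thesis
    proof (intro exI[of _ U] conjI exI[of _ v])
      show "y0 \<in> U" by fact
      show "open U" by fact
      show "\<forall>z. f z \<in> U \<longrightarrow> (\<exists>x. f x = y0)" by fact
      show "\<Union>v = UNIV \<inter> f -` U" by fact
      show "\<forall>u\<in>v. openin (top_of_set UNIV) u" using opn unfolding v_def by auto
      show "pairwise disjnt v" by fact
      show "\<forall>u\<in>v. \<exists>q. homeomorphism u U f q" using hom by blast
    qed
  qed
  have surj: "range f = UNIV"
  proof -
    have o1: "open (range f)"
      unfolding open_subopen[of "range f"]
    proof
      fix y assume "y \<in> range f"
      then obtain a where a: "y = f a" by auto
      obtain A V g where A: "open A" "a \<in> A" "open V" "homeomorphism A V f g"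
        using lh_chart[OF lh] by blast
      have "f ` A = V" using A(4) unfolding homeomorphism_def by auto
      show "\<exists>T. open T \<and> y \<in> T \<and> T \<subseteq> range f"
      proof (intro exI[of _ V] conjI)
        show "open V" by (rule A(3))
        show "y \<in> V" using \<open>f ` A = V\<close> A(2) a by (metis imageI)
        show "V \<subseteq> range f" using \<open>f ` A = V\<close> by auto
      qed
    qed
    have o2: "open (- range f)"
      unfolding open_subopen[of "- range f"]
    proof
      fix y assume y: "y \<in> - range f"
      from key[of y] obtain U where U: "y \<in> U" "open U" "\<forall>z. f z \<in> U \<longrightarrow> (\<exists>x. f x = y)"
        by (elim exE conjE) (rule that)
      have "U \<subseteq> - range f" using U(3) y by auto
      then show "\<exists>T. open T \<and> y \<in> T \<and> T \<subseteq> - range f" using U by blast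
    qed
    have "connected (UNIV::'b set)" using pc_Y by (rule path_connected_imp_connected)
    moreover have "openin (top_of_set UNIV) (range f)" using o1 by simp
    moreover have "closedin (top_of_set UNIV) (range f)" using o2 by (simp add: closed_def)
    ultimately have "range f = {} \<or> range f = UNIV" unfolding connected_clopen by blast
    then show ?thesis by auto
  qed
  show ?thesis
  proof (rule covering_spaceI)
    show "continuous_on UNIV f" by (rule fc)
    show "f ` UNIV = UNIV" by (rule surj)
    fix y0 :: 'b assume "y0 \<in> UNIV"
    obtain U v where Uv: "y0 \<in> U" "open U" "\<Union>v = UNIV \<inter> f -` U" "\<forall>u\<in>v. openin (top_of_set UNIV) u"
      "pairwise disjnt v" "\<forall>u\<in>v. \<exists>q. homeomorphism u U f q"
      using key[of y0] by (elim exE conjE) (rule that)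
    show "\<exists>T. y0 \<in> T \<and> openin (top_of_set UNIV) T \<and>
             (\<exists>v. \<Union>v = UNIV \<inter> f -` T \<and> (\<forall>u\<in>v. openin (top_of_set UNIV) u) \<and>
             pairwise disjnt v \<and> (\<forall>u\<in>v. \<exists>q. homeomorphism u T f q))"
      using Uv by (intro exI[of _ U] conjI exI[of _ v]) auto
  qed
qed

end
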